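(* Let $R$ be a valuation domain with quotient field $Q\neq R$, and let $A\subseteq J$ be $R$-submodules of $Q$. Suppose $J=\bigcup_{\nu<\omega_1} r_\nu^{-1}R=\bigcup_{\nu<\omega_1} s_\nu^{-1}R$, where $r_\nu,s_\nu\in R\setminus\{0\}$, $r_\mu\mid r_\nu$ and $s_\mu\mid s_\nu$ whenever $\mu<\nu<\omega_1$. Then the set $\{\delta<\omega_1 : \bigcap_{\sigma<\delta} r_\sigma A=\bigcap_{\sigma<\delta} s_\sigma A\}$ is a closed unbounded subset of $\omega_1$.
   Context: A subset $C\subseteq\omega_1$ is closed unbounded (a cub) if $\sup C=\omega_1$ and for every $Y\subseteq C$ with $\sup Y<\omega_1$ we have $\sup Y\in C$. *)

theory Defs
  imports "HOL-Library.Countable_Set"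
begin

definition subring :: "'k::field set \<Rightarrow> bool" where
  "subring R \<longleftrightarrow> 0 \<in> R \<and> 1 \<in> R \<and>
     (\<forall>x\<in>R. \<forall>y\<in>R. x + y \<in> R \<and> x - y \<in> R \<and> x * y \<in> R)"

definition quotient_field_of :: "'k::field set \<Rightarrow> bool" where
  "quotient_field_of R \<longleftrightarrow> subring R \<and>
     (\<forall>q. \<exists>a\<in>R. \<exists>b\<in>R. b \<noteq> 0 \<and> q = a / b)"

definition valuation_domain_in :: "'k::field set \<Rightarrow> bool" where
  "valuation_domain_in R \<longleftrightarrow> quotient_field_of R \<and>
     (\<forall>x. x \<noteq> 0 \<longrightarrow> x \<in> R \<or> inverse x \<in> R)"

definition rdvd :: "'k::field set \<Rightarrow> 'k \<Rightarrow> 'k \<Rightarrow> bool" where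
  "rdvd R a b \<longleftrightarrow> (\<exists>t\<in>R. b = a * t)"

definition rsubmodule :: "'k::field set \<Rightarrow> 'k set \<Rightarrow> bool" where
  "rsubmodule R M \<longleftrightarrow> 0 \<in> M \<and> (\<forall>x\<in>M. \<forall>y\<in>M. x + y \<in> M) \<and>
     (\<forall>r\<in>R. \<forall>x\<in>M. r * x \<in> M)"

definition smul_set :: "'k::times \<Rightarrow> 'k set \<Rightarrow> 'k set" where
  "smul_set r M = (\<lambda>m. r * m) ` M"

text \<open>A type of ordinals modelling omega_1: a well-ordered type which is
  uncountable but all of whose proper initial segments are countable.\<close>
definition is_omega1 :: "'w::wellorder itself \<Rightarrow> bool" where
  "is_omega1 _ \<longleftrightarrow> uncountable (UNIV :: 'w set) \<and> (\<forall>i::'w. countable {j. j < i})"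

definition osup :: "'w::wellorder set \<Rightarrow> 'w" where
  "osup Y = (LEAST b. \<forall>y\<in>Y. y \<le> b)"

text \<open>Closed unbounded subsets, as in the paper: sup C = omega_1, and for every
  Y \<subseteq> C with sup Y < omega_1 (i.e. Y bounded in omega_1) we have sup Y \<in> C.\<close>
definition cub :: "'w::wellorder set \<Rightarrow> bool" where
  "cub C \<longleftrightarrow> (\<forall>a. \<exists>c\<in>C. a < c) \<and>
     (\<forall>Y. Y \<subseteq> C \<and> (\<exists>b. \<forall>y\<in>Y. y \<le> b) \<longrightarrow> osup Y \<in> C)"

end

theory Submission
  imports Defs
begin

lemma closed_part:
  fixes F G :: "'w::wellorder \<Rightarrow> 'k set"
  assumes YC: "Y \<subseteq> {\<delta>. (\<Inter>\<sigma>\<in>{\<sigma>. \<sigma> < \<delta>}. F \<sigma>) = (\<Inter>\<sigma>\<in>{\<sigma>. \<sigma> < \<delta>}. G \<sigma>)}"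
    and bd: "\<forall>y\<in>Y. y \<le> b"
  shows "osup Y \<in> {\<delta>. (\<Inter>\<sigma>\<in>{\<sigma>. \<sigma> < \<delta>}. F \<sigma>) = (\<Inter>\<sigma>\<in>{\<sigma>. \<sigma> < \<delta>}. G \<sigma>)}"
proof -
  define d where "d = osup Y"
  have ub: "\<forall>y\<in>Y. y \<le> d" unfolding d_def osup_def by (rule LeastI[of _ b]) (use bd in auto)
  have lst: "\<And>z. \<forall>y\<in>Y. y \<le> z \<Longrightarrow> d \<le> z" unfolding d_def osup_def by (rule Least_le)
  show ?thesis
  proof (cases "d \<in> Y")
    case True then show ?thesis using YC d_def by auto
  next
    case False
    have lt: "\<forall>y\<in>Y. y < d" using ub False by (metis order.order_iff_strict)
    have cof: "\<exists>y\<in>Y. \<sigma> < y" if "\<sigma> < d" for \<sigma>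
    proof (rule ccontr)
      assume "\<not> ?thesis"
      then have "\<forall>y\<in>Y. y \<le> \<sigma>" by (auto simp: not_less)
      then have "d \<le> \<sigma>" by (rule lst)
      with that show False by simp
    qed
    have eq: "\<And>y. y \<in> Y \<Longrightarrow> (\<Inter>\<sigma>\<in>{\<sigma>. \<sigma> < y}. F \<sigma>) = (\<Inter>\<sigma>\<in>{\<sigma>. \<sigma> < y}. G \<sigma>)"
      using YC by auto
    have "(\<Inter>\<sigma>\<in>{\<sigma>. \<sigma> < d}. F \<sigma>) \<subseteq> (\<Inter>\<sigma>\<in>{\<sigma>. \<sigma> < d}. G \<sigma>)"
    proof
      fix x assume x: "x \<in> (\<Inter>\<sigma>\<in>{\<sigma>. \<sigma> < d}. F \<sigma>)"
      show "x \<in> (\<Inter>\<sigma>\<in>{\<sigma>. \<sigma> < d}. G \<sigma>)"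
      proof
        fix \<sigma> assume "\<sigma> \<in> {\<sigma>. \<sigma> < d}"
        then obtain y where y: "y \<in> Y" "\<sigma> < y" using cof by auto
        have "x \<in> (\<Inter>\<sigma>\<in>{\<sigma>. \<sigma> < y}. F \<sigma>)" using x lt y(1) by auto
        then have "x \<in> (\<Inter>\<sigma>\<in>{\<sigma>. \<sigma> < y}. G \<sigma>)" using eq[OF y(1)] by simp
        then show "x \<in> G \<sigma>" using y(2) by auto
      qed
    qed
    moreover have "(\<Inter>\<sigma>\<in>{\<sigma>. \<sigma> < d}. G \<sigma>) \<subseteq> (\<Inter>\<sigma>\<in>{\<sigma>. \<sigma> < d}. F \<sigma>)"
    proof
      fix x assume x: "x \<in> (\<Inter>\<sigma>\<in>{\<sigma>. \<sigma> < d}. G \<sigma>)"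
      show "x \<in> (\<Inter>\<sigma>\<in>{\<sigma>. \<sigma> < d}. F \<sigma>)"
      proof
        fix \<sigma> assume "\<sigma> \<in> {\<sigma>. \<sigma> < d}"
        then obtain y where y: "y \<in> Y" "\<sigma> < y" using cof by auto
        have "x \<in> (\<Inter>\<sigma>\<in>{\<sigma>. \<sigma> < y}. G \<sigma>)" using x lt y(1) by auto
        then have "x \<in> (\<Inter>\<sigma>\<in>{\<sigma>. \<sigma> < y}. F \<sigma>)" using eq[OF y(1)] by simp
        then show "x \<in> F \<sigma>" using y(2) by auto
      qed
    qed
    ultimately show ?thesis using d_def by auto
  qed
qed

lemma bounded_countable:
  assumes "is_omega1 TYPE('w::wellorder)" and "countable (Y::'w set)"
  shows "\<exists>b. \<forall>y\<in>Y. y < b"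
proof -
  have c: "countable {j. j < i}" for i :: 'w using assms(1) unfolding is_omega1_def by auto
  have "{j. j \<le> i} = insert i {j. j < i}" for i :: 'w by auto
  then have "countable {j. j \<le> i}" for i :: 'w using c by simp
  then have "countable (\<Union>y\<in>Y. {j. j \<le> y})" using assms(2) by blast
  moreover have "uncountable (UNIV :: 'w set)" using assms(1) unfolding is_omega1_def by auto
  ultimately have "(\<Union>y\<in>Y. {j. j \<le> y}) \<noteq> UNIV" by metis
  then obtain b where "b \<notin> (\<Union>y\<in>Y. {j. j \<le> y})" by blast
  then show ?thesis by (auto simp: not_le)
qed

lemma rdvd_trans:
  assumes "subring R" "rdvd R a b" "rdvd R b c" shows "rdvd R a c"
  using assms unfolding rdvd_def subring_def by (metis mult.assoc)

lemma rdvd_smul: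
  assumes "rsubmodule R A" "rdvd R a b"
  shows "smul_set b A \<subseteq> smul_set a A"
proof
  fix x assume "x \<in> smul_set b A"
  then obtain m where m: "m \<in> A" "x = b * m" unfolding smul_set_def by auto
  obtain t where t: "t \<in> R" "b = a * t" using assms(2) unfolding rdvd_def by auto
  have "t * m \<in> A" using assms(1) t m unfolding rsubmodule_def by auto
  moreover have "x = a * (t * m)" using m t by (simp add: mult.assoc)
  ultimately show "x \<in> smul_set a A" unfolding smul_set_def by auto
qed

lemma cross:
  fixes r s :: "'w::wellorder \<Rightarrow> 'k::field"
  assumes "subring R"
    and "\<And>\<nu>. r \<nu> \<in> R - {0}" and "\<And>\<nu>. s \<nu> \<in> R - {0}"
    and "J = (\<Union>\<nu>. smul_set (inverse (r \<nu>)) R)"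
    and "J = (\<Union>\<nu>. smul_set (inverse (s \<nu>)) R)"
  shows "\<exists>\<nu>. rdvd R (r \<mu>) (s \<nu>)"
proof -
  have "1 \<in> R" using assms(1) unfolding subring_def by auto
  then have "inverse (r \<mu>) \<in> J" using assms(4) unfolding smul_set_def by force
  then obtain \<nu> t where t: "t \<in> R" "inverse (r \<mu>) = inverse (s \<nu>) * t"
    using assms(5) unfolding smul_set_def by auto
  have "r \<mu> \<noteq> 0" "s \<nu> \<noteq> 0" using assms(2,3) by auto
  then have "s \<nu> = r \<mu> * t" using t(2) by (simp add: field_simps)
  then show ?thesis using t(1) unfolding rdvd_def by auto
qed

theorem lemma2:
  fixes R A J :: "'k::field set"
    and r s :: "'w::wellorder \<Rightarrow> 'k"
  assumes "is_omega1 TYPE('w)"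
    and "valuation_domain_in R"
    and "R \<noteq> UNIV"
    and "rsubmodule R A" and "rsubmodule R J" and "A \<subseteq> J"
    and "\<And>\<nu>. r \<nu> \<in> R - {0}" and "\<And>\<nu>. s \<nu> \<in> R - {0}"
    and "\<And>\<mu> \<nu>. \<mu> < \<nu> \<Longrightarrow> rdvd R (r \<mu>) (r \<nu>)"
    and "\<And>\<mu> \<nu>. \<mu> < \<nu> \<Longrightarrow> rdvd R (s \<mu>) (s \<nu>)"
    and "J = (\<Union>\<nu>. smul_set (inverse (r \<nu>)) R)"
    and "J = (\<Union>\<nu>. smul_set (inverse (s \<nu>)) R)"
  shows "cub {\<delta>. (\<Inter>\<sigma>\<in>{\<sigma>. \<sigma> < \<delta>}. smul_set (r \<sigma>) A)
                = (\<Inter>\<sigma>\<in>{\<sigma>. \<sigma> < \<delta>}. smul_set (s \<sigma>) A)}"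
proof -
  have sr: "subring R" using assms(2) unfolding valuation_domain_in_def quotient_field_of_def by auto
  have above: "\<exists>b. \<forall>y\<in>Y. y < b" if "finite Y" for Y :: "'w set"
    using bounded_countable[OF assms(1)] that countable_finite by blast
  have mono_r: "smul_set (r \<nu>) A \<subseteq> smul_set (r \<mu>) A" if "\<mu> \<le> \<nu>" for \<mu> \<nu>
    using that rdvd_smul[OF assms(4) assms(9)] by (cases "\<mu> = \<nu>") auto
  have mono_s: "smul_set (s \<nu>) A \<subseteq> smul_set (s \<mu>) A" if "\<mu> \<le> \<nu>" for \<mu> \<nu>
    using that rdvd_smul[OF assms(4) assms(10)] by (cases "\<mu> = \<nu>") auto
  have step: "\<exists>\<nu>. x < \<nu> \<and> rdvd R (r x) (s \<nu>) \<and> rdvd R (s x) (r \<nu>)" for x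
  proof -
    obtain \<nu>1 where n1: "rdvd R (r x) (s \<nu>1)" using cross[OF sr assms(7,8,11,12)] by blast
    obtain \<nu>2 where n2: "rdvd R (s x) (r \<nu>2)" using cross[OF sr assms(8,7,12,11)] by blast
    obtain b where b: "\<forall>y\<in>{x,\<nu>1,\<nu>2}. y < b" using above[of "{x,\<nu>1,\<nu>2}"] by auto
    have "rdvd R (r x) (s b)" using rdvd_trans[OF sr n1 assms(10)] b by auto
    moreover have "rdvd R (s x) (r b)" using rdvd_trans[OF sr n2 assms(9)] b by auto
    ultimately show ?thesis using b by auto
  qed
  define h where "h x = (SOME \<nu>. x < \<nu> \<and> rdvd R (r x) (s \<nu>) \<and> rdvd R (s x) (r \<nu>))" for x
  have h: "x < h x \<and> rdvd R (r x) (s (h x)) \<and> rdvd R (s x) (r (h x))" for x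
    unfolding h_def by (rule someI_ex) (rule step)
  let ?C = "{\<delta>. (\<Inter>\<sigma>\<in>{\<sigma>. \<sigma> < \<delta>}. smul_set (r \<sigma>) A) = (\<Inter>\<sigma>\<in>{\<sigma>. \<sigma> < \<delta>}. smul_set (s \<sigma>) A)}"
  have unb: "\<exists>c\<in>?C. a < c" for a
  proof -
    define f where "f n = (h ^^ n) a" for n
    have fS: "f (Suc n) = h (f n)" for n unfolding f_def by simp
    obtain b where "\<forall>y\<in>range f. y < b" using bounded_countable[OF assms(1), of "range f"] by auto
    then have ex: "\<exists>b. \<forall>n. f n < b" by auto
    define d where "d = (LEAST b. \<forall>n. f n < b)"
    have fd: "\<forall>n. f n < d" unfolding d_def using ex by (rule LeastI_ex)
    have cof: "\<exists>n. \<sigma> \<le> f n" if "\<sigma> < d" for \<sigma>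
    proof (rule ccontr)
      assume "\<not> ?thesis"
      then have "\<forall>n. f n < \<sigma>" by (auto simp: not_le)
      then have "d \<le> \<sigma>" unfolding d_def by (rule Least_le)
      with that show False by simp
    qed
    have "d \<in> ?C"
    proof -
      have "(\<Inter>\<sigma>\<in>{\<sigma>. \<sigma> < d}. smul_set (r \<sigma>) A) \<subseteq> (\<Inter>\<sigma>\<in>{\<sigma>. \<sigma> < d}. smul_set (s \<sigma>) A)"
      proof
        fix x assume x: "x \<in> (\<Inter>\<sigma>\<in>{\<sigma>. \<sigma> < d}. smul_set (r \<sigma>) A)"
        show "x \<in> (\<Inter>\<sigma>\<in>{\<sigma>. \<sigma> < d}. smul_set (s \<sigma>) A)"
        proof
          fix \<sigma> assume "\<sigma> \<in> {\<sigma>. \<sigma> < d}"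
          then obtain n where n: "\<sigma> \<le> f n" using cof by auto
          have "x \<in> smul_set (r (f (Suc n))) A" using x fd by auto
          also have "\<dots> \<subseteq> smul_set (s (f n)) A" using h[of "f n"] rdvd_smul[OF assms(4)] fS by auto
          also have "\<dots> \<subseteq> smul_set (s \<sigma>) A" using mono_s n by auto
          finally show "x \<in> smul_set (s \<sigma>) A" .
        qed
      qed
      moreover have "(\<Inter>\<sigma>\<in>{\<sigma>. \<sigma> < d}. smul_set (s \<sigma>) A) \<subseteq> (\<Inter>\<sigma>\<in>{\<sigma>. \<sigma> < d}. smul_set (r \<sigma>) A)"
      proof
        fix x assume x: "x \<in> (\<Inter>\<sigma>\<in>{\<sigma>. \<sigma> < d}. smul_set (s \<sigma>) A)"
        show "x \<in> (\<Inter>\<sigma>\<in>{\<sigma>. \<sigma> < d}. smul_set (r \<sigma>) A)"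
        proof
          fix \<sigma> assume "\<sigma> \<in> {\<sigma>. \<sigma> < d}"
          then obtain n where n: "\<sigma> \<le> f n" using cof by auto
          have "x \<in> smul_set (s (f (Suc n))) A" using x fd by auto
          also have "\<dots> \<subseteq> smul_set (r (f n)) A" using h[of "f n"] rdvd_smul[OF assms(4)] fS by auto
          also have "\<dots> \<subseteq> smul_set (r \<sigma>) A" using mono_r n by auto
          finally show "x \<in> smul_set (r \<sigma>) A" .
        qed
      qed
      ultimately show ?thesis by auto
    qed
    moreover have "a < d" using fd[rule_format, of 0] unfolding f_def by simp
    ultimately show ?thesis by blast
  qed
  show ?thesis unfolding cub_def
  proof (rule conjI)
    show "\<forall>a. \<exists>c\<in>?C. a < c" using unb by blast
  next
    show "\<forall>Y. Y \<subseteq> ?C \<and> (\<exists>b. \<forall>y\<in>Y. y \<le> b) \<longrightarrow> osup Y \<in> ?C"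
    proof (intro allI impI)
      fix Y assume "Y \<subseteq> ?C \<and> (\<exists>b. \<forall>y\<in>Y. y \<le> b)"
      then obtain b where "Y \<subseteq> ?C" "\<forall>y\<in>Y. y \<le> b" by blast
      then show "osup Y \<in> ?C" by (rule closed_part)
    qed
  qed
qed

end
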